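(* Let $c\in[\frac12,1)$ and let $d,\delta$ be positive integers with $d\ge\delta$. Let $G$ be a graph with maximum degree $\delta$ and $w:V(G)\to[0,1]$ a weight function with $w(V(G))=1$, and assume $G$ has no $d$-bounded $(w,c)$-balanced separator. Fix a bijection $\mathcal{O}:V(G)\to\{1,\dots,|V(G)|\}$. Then the relation $\le_A$ is a partial order on $V(G)$.
   Context: For $X\subseteq V(G)$, $w(X)=\sum_{x\in X}w(x)$; $N[v]=N(v)\cup\{v\}$; $N^d[v]$ is the set of vertices at distance at most $d$ from $v$. A set $X$ is $d$-bounded if $X\subseteq N^d[v]$ for some $v$. $X$ is a $(w,c)$-balanced separator if every connected component $D$ of $G\setminus X$ has $w(D)\le c$. For $v\in V(G)$, the canonical star separation $S_v=(A_v,C_v,B_v)$ is: $B_v$ the (under these assumptions unique) largest-weight connected component of $G\setminus N[v]$, $C_v$ the set consisting of $v$ and every vertex of $N(v)$ with a neighbor in $B_v$, and $A_v=V(G)\setminus(B_v\cup C_v)$. Two vertices $u,v$ are star twins if $B_u=B_v$, $C_u\setminus\{u\}=C_v\setminus\{v\}$ and $A_u\setminus\{v\}=A_v\setminus\{u\}$. The relation $\le_A$ is defined by: $x\le_A y$ if $x=y$, or $x,y$ are star twins and $\mathcal{O}(x)<\mathcal{O}(y)$, or $x,y$ are not star twins and $y\in A_x$. *)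

theory Defs
  imports Complex_Main
begin

definition simple_graph :: "'a set \<Rightarrow> ('a \<Rightarrow> 'a \<Rightarrow> bool) \<Rightarrow> bool" where
  "simple_graph V E \<longleftrightarrow> finite V \<and> (\<forall>x y. E x y \<longrightarrow> x \<in> V \<and> y \<in> V)
     \<and> (\<forall>x y. E x y \<longrightarrow> E y x) \<and> (\<forall>x. \<not> E x x)"

definition nbhd :: "'a set \<Rightarrow> ('a \<Rightarrow> 'a \<Rightarrow> bool) \<Rightarrow> 'a \<Rightarrow> 'a set" where
  "nbhd V E v = {u \<in> V. E v u}"

definition cnbhd :: "'a set \<Rightarrow> ('a \<Rightarrow> 'a \<Rightarrow> bool) \<Rightarrow> 'a \<Rightarrow> 'a set" where
  "cnbhd V E v = insert v (nbhd V E v)"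

definition max_degree :: "'a set \<Rightarrow> ('a \<Rightarrow> 'a \<Rightarrow> bool) \<Rightarrow> nat" where
  "max_degree V E = Max ((\<lambda>v. card (nbhd V E v)) ` V)"

definition ball_nbhd :: "'a set \<Rightarrow> ('a \<Rightarrow> 'a \<Rightarrow> bool) \<Rightarrow> nat \<Rightarrow> 'a \<Rightarrow> 'a set" where
  "ball_nbhd V E d v = {u \<in> V. \<exists>k\<le>d. ((\<lambda>a b. E a b \<and> a \<in> V \<and> b \<in> V) ^^ k) v u}"

definition d_bounded :: "'a set \<Rightarrow> ('a \<Rightarrow> 'a \<Rightarrow> bool) \<Rightarrow> nat \<Rightarrow> 'a set \<Rightarrow> bool" where
  "d_bounded V E d X \<longleftrightarrow> (\<exists>v\<in>V. X \<subseteq> ball_nbhd V E d v)"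

text \<open>Connected components of the induced subgraph G \ X.\<close>
definition components :: "'a set \<Rightarrow> ('a \<Rightarrow> 'a \<Rightarrow> bool) \<Rightarrow> 'a set \<Rightarrow> 'a set set" where
  "components V E X = {C. \<exists>x \<in> V - X. C = {y. (\<lambda>a b. E a b \<and> a \<in> V - X \<and> b \<in> V - X)\<^sup>*\<^sup>* x y}}"

definition weight :: "('a \<Rightarrow> real) \<Rightarrow> 'a set \<Rightarrow> real" where
  "weight w X = sum w X"

definition balanced_separator ::
  "'a set \<Rightarrow> ('a \<Rightarrow> 'a \<Rightarrow> bool) \<Rightarrow> ('a \<Rightarrow> real) \<Rightarrow> real \<Rightarrow> 'a set \<Rightarrow> bool" where
  "balanced_separator V E w c X \<longleftrightarrow> X \<subseteq> V \<and> (\<forall>D \<in> components V E X. weight w D \<le> c)"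

definition starB :: "'a set \<Rightarrow> ('a \<Rightarrow> 'a \<Rightarrow> bool) \<Rightarrow> ('a \<Rightarrow> real) \<Rightarrow> 'a \<Rightarrow> 'a set" where
  "starB V E w v = (THE D. D \<in> components V E (cnbhd V E v)
       \<and> (\<forall>D' \<in> components V E (cnbhd V E v). weight w D' \<le> weight w D))"

definition starC :: "'a set \<Rightarrow> ('a \<Rightarrow> 'a \<Rightarrow> bool) \<Rightarrow> ('a \<Rightarrow> real) \<Rightarrow> 'a \<Rightarrow> 'a set" where
  "starC V E w v = insert v {u \<in> nbhd V E v. \<exists>b \<in> starB V E w v. E u b}"

definition starA :: "'a set \<Rightarrow> ('a \<Rightarrow> 'a \<Rightarrow> bool) \<Rightarrow> ('a \<Rightarrow> real) \<Rightarrow> 'a \<Rightarrow> 'a set" where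
  "starA V E w v = V - (starB V E w v \<union> starC V E w v)"

definition star_twins :: "'a set \<Rightarrow> ('a \<Rightarrow> 'a \<Rightarrow> bool) \<Rightarrow> ('a \<Rightarrow> real) \<Rightarrow> 'a \<Rightarrow> 'a \<Rightarrow> bool" where
  "star_twins V E w u v \<longleftrightarrow> starB V E w u = starB V E w v
     \<and> starC V E w u - {u} = starC V E w v - {v}
     \<and> starA V E w u - {v} = starA V E w v - {u}"

definition leA :: "'a set \<Rightarrow> ('a \<Rightarrow> 'a \<Rightarrow> bool) \<Rightarrow> ('a \<Rightarrow> real) \<Rightarrow> ('a \<Rightarrow> nat) \<Rightarrow> 'a \<Rightarrow> 'a \<Rightarrow> bool" where
  "leA V E w ord x y \<longleftrightarrow> x = y
     \<or> (star_twins V E w x y \<and> ord x < ord y)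
     \<or> (\<not> star_twins V E w x y \<and> y \<in> starA V E w x)"

definition leA_rel :: "'a set \<Rightarrow> ('a \<Rightarrow> 'a \<Rightarrow> bool) \<Rightarrow> ('a \<Rightarrow> real) \<Rightarrow> ('a \<Rightarrow> nat) \<Rightarrow> 'a rel" where
  "leA_rel V E w ord = {(x, y). x \<in> V \<and> y \<in> V \<and> leA V E w ord x y}"

end

theory Submission
  imports Defs
begin

definition Rl :: "'a set \<Rightarrow> ('a \<Rightarrow> 'a \<Rightarrow> bool) \<Rightarrow> 'a set \<Rightarrow> 'a \<Rightarrow> 'a \<Rightarrow> bool" where
  "Rl V E X = (\<lambda>a b. E a b \<and> a \<in> V - X \<and> b \<in> V - X)"

definition Sb :: "'a set \<Rightarrow> ('a \<Rightarrow> 'a \<Rightarrow> bool) \<Rightarrow> 'a set \<Rightarrow> 'a set" where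
  "Sb V E B = {u \<in> V - B. \<exists>b\<in>B. E u b}"

lemma comps_alt: "components V E X = {C. \<exists>x \<in> V - X. C = {y. (Rl V E X)\<^sup>*\<^sup>* x y}}"
  unfolding components_def Rl_def by simp

lemma rt_in: "(Rl V E X)\<^sup>*\<^sup>* x y \<Longrightarrow> x \<in> V - X \<Longrightarrow> y \<in> V - X"
  by (induction rule: rtranclp_induct) (auto simp: Rl_def)

lemma rt_sym:
  assumes "\<forall>x y. E x y \<longrightarrow> E y x"
  shows "(Rl V E X)\<^sup>*\<^sup>* x y \<Longrightarrow> (Rl V E X)\<^sup>*\<^sup>* y x"
proof (induction rule: rtranclp_induct)
  case base then show ?case by simp
next
  case (step y z)
  have "Rl V E X z y" using step(2) assms by (auto simp: Rl_def)
  then show ?case using step(3) by (meson converse_rtranclp_into_rtranclp)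
qed

lemma comp_sub: "D \<in> components V E X \<Longrightarrow> D \<subseteq> V - X"
  unfolding comps_alt using rt_in by fastforce

lemma comp_closed: "D \<in> components V E X \<Longrightarrow> b \<in> D \<Longrightarrow> u \<in> V - X \<Longrightarrow> E b u \<Longrightarrow> u \<in> D"
proof -
  assume D: "D \<in> components V E X" and b: "b \<in> D" and u: "u \<in> V - X" and e: "E b u"
  from D obtain x where x: "x \<in> V - X" "D = {y. (Rl V E X)\<^sup>*\<^sup>* x y}" unfolding comps_alt by auto
  have "b \<in> V - X" using comp_sub[OF D] b by auto
  then have "Rl V E X b u" using u e by (auto simp: Rl_def)
  then show "u \<in> D" using b x by (auto intro: rtranclp.rtrancl_into_rtrancl)
qed

lemma comp_disj:
  assumes "\<forall>x y. E x y \<longrightarrow> E y x" "D1 \<in> components V E X" "D2 \<in> components V E X" "z \<in> D1" "z \<in> D2"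
  shows "D1 = D2"
proof -
  from assms(2) obtain x1 where x1: "x1 \<in> V - X" "D1 = {y. (Rl V E X)\<^sup>*\<^sup>* x1 y}" unfolding comps_alt by auto
  from assms(3) obtain x2 where x2: "x2 \<in> V - X" "D2 = {y. (Rl V E X)\<^sup>*\<^sup>* x2 y}" unfolding comps_alt by auto
  have "(Rl V E X)\<^sup>*\<^sup>* x1 z" "(Rl V E X)\<^sup>*\<^sup>* x2 z" using assms x1 x2 by auto
  then have a: "(Rl V E X)\<^sup>*\<^sup>* x1 x2" "(Rl V E X)\<^sup>*\<^sup>* x2 x1"
    using rt_sym[OF assms(1)] by (meson rtranclp_trans)+
  show ?thesis unfolding x1 x2 using a by (auto intro: rtranclp_trans)
qed

lemma uniq:
  assumes "simple_graph V E" "\<forall>v \<in> V. 0 \<le> w v" "weight w V = 1"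
    "D1 \<in> components V E X" "D2 \<in> components V E X"
    "weight w D1 > 1/2" "weight w D2 > 1/2"
  shows "D1 = D2"
proof (rule ccontr)
  assume ne: "D1 \<noteq> D2"
  have sym: "\<forall>x y. E x y \<longrightarrow> E y x" and fin: "finite V" using assms(1) by (auto simp: simple_graph_def)
  have dis: "D1 \<inter> D2 = {}" using comp_disj[OF sym assms(4,5)] ne by blast
  have s1: "D1 \<subseteq> V" "D2 \<subseteq> V" using comp_sub assms(4,5) by blast+
  have f: "finite D1" "finite D2" using s1 fin finite_subset by blast+
  have "weight w (D1 \<union> D2) = weight w D1 + weight w D2"
    unfolding weight_def using dis f by (simp add: sum.union_disjoint)
  moreover have "weight w (D1 \<union> D2) \<le> weight w V"
    unfolding weight_def using s1 fin assms(2) by (intro sum_mono2) auto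
  ultimately show False using assms by auto
qed

lemma comps_fin: "finite V \<Longrightarrow> finite (components V E X)"
proof -
  assume "finite V"
  moreover have "components V E X \<subseteq> Pow V" using comp_sub by blast
  ultimately show ?thesis by (meson finite_Pow_iff finite_subset)
qed

lemma Bprop:
  assumes "simple_graph V E" "\<forall>v \<in> V. 0 \<le> w v" "weight w V = 1"
    and ex: "\<exists>D \<in> components V E X. weight w D > 1/2"
    and B: "B = (THE D. D \<in> components V E X \<and> (\<forall>D' \<in> components V E X. weight w D' \<le> weight w D))"
  shows "B \<in> components V E X \<and> weight w B > 1/2
     \<and> (\<forall>D \<in> components V E X. weight w D > 1/2 \<longrightarrow> D = B)"
proof -
  have fin: "finite V" using assms(1) by (auto simp: simple_graph_def)
  obtain D0 where D0: "D0 \<in> components V E X" "weight w D0 > 1/2" using ex by blast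
  obtain M where M: "M \<in> components V E X" "\<forall>D' \<in> components V E X. weight w D' \<le> weight w M"
  proof -
    let ?C = "components V E X"
    have fC: "finite (weight w ` ?C)" using comps_fin[OF fin] by blast
    have neC: "weight w ` ?C \<noteq> {}" using D0 by blast
    have "Max (weight w ` ?C) \<in> weight w ` ?C" using Max_in[OF fC neC] .
    then obtain M where "M \<in> ?C" "weight w M = Max (weight w ` ?C)" by auto
    moreover have "\<forall>D' \<in> ?C. weight w D' \<le> Max (weight w ` ?C)" using fC by auto
    ultimately show ?thesis using that by metis
  qed
  have Mw: "weight w M > 1/2" using M D0 by force
  have "B = M" unfolding B
  proof (rule the_equality)
    show "M \<in> components V E X \<and> (\<forall>D' \<in> components V E X. weight w D' \<le> weight w M)" using M by blast
  next
    fix D assume D: "D \<in> components V E X \<and> (\<forall>D' \<in> components V E X. weight w D' \<le> weight w D)"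
    then have "weight w D > 1/2" using Mw M by force
    then show "D = M" using uniq[OF assms(1-3)] D M Mw by blast
  qed
  then show ?thesis using M Mw uniq[OF assms(1-3)] by blast
qed


definition good :: "'a set \<Rightarrow> ('a \<Rightarrow> 'a \<Rightarrow> bool) \<Rightarrow> ('a \<Rightarrow> real) \<Rightarrow> bool" where
  "good V E w \<longleftrightarrow> simple_graph V E \<and> (\<forall>v \<in> V. 0 \<le> w v) \<and> weight w V = 1
     \<and> (\<forall>v \<in> V. \<exists>D \<in> components V E (cnbhd V E v). weight w D > 1/2)"

lemma B_facts:
  assumes "good V E w" "v \<in> V"
  shows "starB V E w v \<in> components V E (cnbhd V E v) \<and> weight w (starB V E w v) > 1/2
     \<and> (\<forall>D \<in> components V E (cnbhd V E v). weight w D > 1/2 \<longrightarrow> D = starB V E w v)"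
  using assms unfolding good_def by (intro Bprop[where w=w]) (auto simp: starB_def)

lemma B_sub:
  assumes "good V E w" "v \<in> V"
  shows "starB V E w v \<subseteq> V - cnbhd V E v"
  using B_facts[OF assms] comp_sub by blast

lemma C_eq:
  assumes "good V E w" "v \<in> V"
  shows "starC V E w v = insert v (Sb V E (starB V E w v))"
proof -
  let ?B = "starB V E w v"
  have sg: "simple_graph V E" using assms(1) by (simp add: good_def)
  have Bc: "?B \<in> components V E (cnbhd V E v)" using B_facts[OF assms] by blast
  have Bs: "?B \<subseteq> V - cnbhd V E v" using B_sub[OF assms] .
  have "{u \<in> nbhd V E v. \<exists>b \<in> ?B. E u b} = Sb V E ?B"
  proof
    show "{u \<in> nbhd V E v. \<exists>b \<in> ?B. E u b} \<subseteq> Sb V E ?B"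
      using Bs by (auto simp: Sb_def nbhd_def cnbhd_def)
  next
    show "Sb V E ?B \<subseteq> {u \<in> nbhd V E v. \<exists>b \<in> ?B. E u b}"
    proof
      fix u assume u: "u \<in> Sb V E ?B"
      then obtain b where b: "b \<in> ?B" "E u b" "u \<in> V" "u \<notin> ?B" by (auto simp: Sb_def)
      have Eb: "E b u" using b sg by (auto simp: simple_graph_def)
      have "u \<in> cnbhd V E v"
      proof (rule ccontr)
        assume "u \<notin> cnbhd V E v"
        then have "u \<in> ?B" using comp_closed[OF Bc b(1) _ Eb] b(3) by blast
        then show False using b by blast
      qed
      moreover have "u \<noteq> v"
      proof
        assume "u = v"
        then have "b \<in> cnbhd V E v" using b Bs by (auto simp: cnbhd_def nbhd_def)
        then show False using b Bs by blast
      qed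
      ultimately show "u \<in> {u \<in> nbhd V E v. \<exists>b \<in> ?B. E u b}" using b by (auto simp: cnbhd_def)
    qed
  qed
  then show ?thesis unfolding starC_def by simp
qed

lemma A_eq:
  assumes "good V E w" "v \<in> V"
  shows "starA V E w v = (V - starB V E w v - Sb V E (starB V E w v)) - {v}"
  unfolding starA_def C_eq[OF assms] by blast

lemma self_R:
  assumes "good V E w" "v \<in> V"
  shows "v \<in> V - starB V E w v - Sb V E (starB V E w v)"
  using B_sub[OF assms] assms(2) by (auto simp: Sb_def cnbhd_def nbhd_def)

lemma twin_iff:
  assumes "good V E w" "u \<in> V" "v \<in> V"
  shows "star_twins V E w u v \<longleftrightarrow> starB V E w u = starB V E w v"
  unfolding star_twins_def using A_eq[OF assms(1,2)] A_eq[OF assms(1,3)]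
    C_eq[OF assms(1,2)] C_eq[OF assms(1,3)] self_R[OF assms(1,2)] self_R[OF assms(1,3)]
  by (auto simp: Sb_def)

lemma Ranti: "B1 \<subseteq> B2 \<Longrightarrow> V - B2 - Sb V E B2 \<subseteq> V - B1 - Sb V E B1"
  by (auto simp: Sb_def)

lemma mono:
  assumes g: "good V E w" and x: "x \<in> V" and y: "y \<in> V" and yA: "y \<in> starA V E w x"
  shows "starB V E w x \<subseteq> starB V E w y"
proof -
  let ?Bx = "starB V E w x" and ?By = "starB V E w y"
  have sg: "simple_graph V E" and nn: "\<forall>v \<in> V. 0 \<le> w v" and fin: "finite V"
    using g by (auto simp: good_def simple_graph_def)
  have Bxc: "?Bx \<in> components V E (cnbhd V E x)" and Bxw: "weight w ?Bx > 1/2"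
    using B_facts[OF g x] by blast+
  have Byf: "\<forall>D \<in> components V E (cnbhd V E y). weight w D > 1/2 \<longrightarrow> D = ?By"
    using B_facts[OF g y] by blast
  have yR: "y \<notin> ?Bx" "y \<notin> Sb V E ?Bx" using yA A_eq[OF g x] by auto
  have dis: "?Bx \<inter> cnbhd V E y = {}"
  proof -
    { fix b assume b: "b \<in> ?Bx" "b \<in> cnbhd V E y"
      then have "b = y \<or> E y b" by (auto simp: cnbhd_def nbhd_def)
      then have False using b yR y by (auto simp: Sb_def) }
    then show ?thesis by blast
  qed
  obtain b0 where b0: "b0 \<in> V - cnbhd V E x" "?Bx = {z. (Rl V E (cnbhd V E x))\<^sup>*\<^sup>* b0 z}"
    using Bxc unfolding comps_alt by blast
  have b0B: "b0 \<in> ?Bx" using b0 by simp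
  have b0y: "b0 \<in> V - cnbhd V E y" using b0B dis b0 by blast
  define D where "D = {z. (Rl V E (cnbhd V E y))\<^sup>*\<^sup>* b0 z}"
  have Dc: "D \<in> components V E (cnbhd V E y)" unfolding comps_alt D_def using b0y by blast
  have "\<And>z. (Rl V E (cnbhd V E x))\<^sup>*\<^sup>* b0 z \<Longrightarrow> (Rl V E (cnbhd V E y))\<^sup>*\<^sup>* b0 z"
  proof -
    fix z assume "(Rl V E (cnbhd V E x))\<^sup>*\<^sup>* b0 z"
    then show "(Rl V E (cnbhd V E y))\<^sup>*\<^sup>* b0 z"
    proof (induction rule: rtranclp_induct)
      case base then show ?case by simp
    next
      case (step u z)
      have "u \<in> ?Bx" "z \<in> ?Bx" using step(1,2) b0(2) by (auto intro: rtranclp.rtrancl_into_rtrancl)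
      then have "u \<in> V - cnbhd V E y" "z \<in> V - cnbhd V E y"
        using dis B_sub[OF g x] by blast+
      then have "Rl V E (cnbhd V E y) u z" using step(2) by (auto simp: Rl_def)
      then show ?case using step(3) by (auto intro: rtranclp.rtrancl_into_rtrancl)
    qed
  qed
  then have sub: "?Bx \<subseteq> D" unfolding D_def using b0(2) by blast
  have "D \<subseteq> V" using comp_sub[OF Dc] by blast
  then have "weight w ?Bx \<le> weight w D"
    unfolding weight_def using sub nn fin by (intro sum_mono2) (auto intro: finite_subset)
  then have "D = ?By" using Byf Dc Bxw by auto
  then show ?thesis using sub by simp
qed


lemma leA_iff:
  assumes "good V E w" "x \<in> V" "y \<in> V"
  shows "leA V E w ord x y \<longleftrightarrow> x = y
    \<or> (starB V E w x = starB V E w y \<and> ord x < ord y)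
    \<or> (starB V E w x \<noteq> starB V E w y \<and> y \<in> (V - starB V E w x - Sb V E (starB V E w x)) - {x})"
  unfolding leA_def twin_iff[OF assms] A_eq[OF assms(1,2)] by blast

theorem lemma4p3:
  fixes V :: "'a set" and E :: "'a \<Rightarrow> 'a \<Rightarrow> bool" and w :: "'a \<Rightarrow> real"
    and c :: real and d \<delta> :: nat and ord :: "'a \<Rightarrow> nat"
  assumes "1/2 \<le> c" and "c < 1"
    and "0 < d" and "0 < \<delta>" and "\<delta> \<le> d"
    and "simple_graph V E"
    and "max_degree V E = \<delta>"
    and "\<forall>v \<in> V. 0 \<le> w v \<and> w v \<le> 1"
    and "weight w V = 1"
    and "\<not> (\<exists>X. d_bounded V E d X \<and> balanced_separator V E w c X)"
    and "bij_betw ord V {1..card V}"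
  shows "partial_order_on V (leA_rel V E w ord)"
proof -
  have ex: "\<exists>D \<in> components V E (cnbhd V E v). weight w D > 1/2" if v: "v \<in> V" for v
  proof -
    have "cnbhd V E v \<subseteq> ball_nbhd V E d v"
    proof
      fix u assume u: "u \<in> cnbhd V E v"
      show "u \<in> ball_nbhd V E d v"
      proof (cases "u = v")
        case True
        then show ?thesis unfolding ball_nbhd_def using v
          by (intro CollectI conjI exI[of _ 0]) auto
      next
        case False
        then have "u \<in> V" "E v u" using u by (auto simp: cnbhd_def nbhd_def)
        then show ?thesis unfolding ball_nbhd_def using v assms(3)
          by (intro CollectI conjI exI[of _ 1]) auto
      qed
    qed
    then have "d_bounded V E d (cnbhd V E v)" unfolding d_bounded_def using v by blast
    moreover have "cnbhd V E v \<subseteq> V" using v by (auto simp: cnbhd_def nbhd_def)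
    ultimately obtain D where "D \<in> components V E (cnbhd V E v)" "\<not> weight w D \<le> c"
      using assms(10) unfolding balanced_separator_def by blast
    then show ?thesis using assms(1) by (intro bexI[of _ D]) auto
  qed
  have g: "good V E w" unfolding good_def using assms(6,8,9) ex by blast
  define B where "B = starB V E w"
  define R where "R = (\<lambda>x. V - B x - Sb V E (B x))"
  have F1: "\<And>v. v \<in> V \<Longrightarrow> v \<in> R v" unfolding R_def B_def using self_R[OF g] by blast
  have F2: "\<And>x y. x \<in> V \<Longrightarrow> y \<in> V \<Longrightarrow> y \<in> R x - {x} \<Longrightarrow> B x \<subseteq> B y"
    unfolding R_def B_def using mono[OF g] A_eq[OF g] by blast
  have F3: "\<And>x y. B x \<subseteq> B y \<Longrightarrow> R y \<subseteq> R x" unfolding R_def using Ranti by blast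
  have L: "\<And>x y. x \<in> V \<Longrightarrow> y \<in> V \<Longrightarrow> leA V E w ord x y \<longleftrightarrow> x = y
    \<or> (B x = B y \<and> ord x < ord y) \<or> (B x \<noteq> B y \<and> y \<in> R x - {x})"
    unfolding R_def B_def using leA_iff[OF g] by blast
  have refl: "refl_on V (leA_rel V E w ord)"
    unfolding refl_on_def leA_rel_def leA_def by auto
  have tr: "trans (leA_rel V E w ord)"
  proof (rule transI)
    fix x y z assume "(x, y) \<in> leA_rel V E w ord" "(y, z) \<in> leA_rel V E w ord"
    then have xyz: "x \<in> V" "y \<in> V" "z \<in> V" and a: "leA V E w ord x y" and b: "leA V E w ord y z"
      unfolding leA_rel_def by auto
    have "leA V E w ord x z"
    proof (cases "x = y \<or> y = z \<or> x = z")
      case True then show ?thesis using a b unfolding leA_def by auto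
    next
      case False
      then have ne: "x \<noteq> y" "y \<noteq> z" "x \<noteq> z" by auto
      have a': "(B x = B y \<and> ord x < ord y) \<or> (B x \<noteq> B y \<and> y \<in> R x - {x})"
        using L[OF xyz(1,2)] a ne by blast
      have b': "(B y = B z \<and> ord y < ord z) \<or> (B y \<noteq> B z \<and> z \<in> R y - {y})"
        using L[OF xyz(2,3)] b ne by blast
      show ?thesis
      proof -
        { assume "B x = B y" "ord x < ord y" "B y = B z" "ord y < ord z"
          then have ?thesis using L[OF xyz(1,3)] by auto }
        moreover
        { assume "B x = B y" "B y \<noteq> B z" "z \<in> R y - {y}"
          then have ?thesis using L[OF xyz(1,3)] ne by (auto simp: R_def) }
        moreover
        { assume h: "B x \<noteq> B y" "y \<in> R x - {x}" "B y = B z"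
          then have "B x \<subseteq> B z" using F2 xyz by metis
          then have "z \<in> R x" using F3 F1 xyz(3) by blast
          then have ?thesis using L[OF xyz(1,3)] ne h by auto }
        moreover
        { assume h: "B x \<noteq> B y" "y \<in> R x - {x}" "B y \<noteq> B z" "z \<in> R y - {y}"
          then have s1: "B x \<subseteq> B y" and s2: "B y \<subseteq> B z" using F2 xyz by metis+
          then have "z \<in> R x" using F3 h by blast
          moreover have "B x \<noteq> B z" using s1 s2 h by blast
          ultimately have ?thesis using L[OF xyz(1,3)] ne by auto }
        ultimately show ?thesis using a' b' by blast
      qed
    qed
    then show "(x, z) \<in> leA_rel V E w ord" using xyz unfolding leA_rel_def by auto
  qed
  have an: "antisym (leA_rel V E w ord)"
  proof (rule antisymI)
    fix x y assume "(x, y) \<in> leA_rel V E w ord" "(y, x) \<in> leA_rel V E w ord"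
    then have xy: "x \<in> V" "y \<in> V" and a: "leA V E w ord x y" and b: "leA V E w ord y x"
      unfolding leA_rel_def by auto
    show "x = y"
    proof (rule ccontr)
      assume ne: "x \<noteq> y"
      have a': "(B x = B y \<and> ord x < ord y) \<or> (B x \<noteq> B y \<and> y \<in> R x - {x})"
        using L[OF xy(1,2)] a ne by blast
      have b': "(B y = B x \<and> ord y < ord x) \<or> (B y \<noteq> B x \<and> x \<in> R y - {y})"
        using L[OF xy(2,1)] b ne by blast
      show False
      proof (cases "B x = B y")
        case True then show ?thesis using a' b' by auto
      next
        case False
        then have "B x \<subseteq> B y" "B y \<subseteq> B x" using a' b' F2 xy by metis+
        then show ?thesis using False by blast
      qed
    qed
  qed
  have sub: "leA_rel V E w ord \<subseteq> V \<times> V" unfolding leA_rel_def by auto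
  show ?thesis unfolding partial_order_on_def preorder_on_def using sub refl tr an by blast
qed

end
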